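(* Let $\mathbf{A}$ be an atomic symmetric integral relation algebra that contains a flexible trio. Then $\mathbf{A}$ has the 1-point extension property and $\mathbf{A}$ is representable.
   Context: Relation algebras are in the sense of Tarski; $1'$ identity, $0'$ its complement (diversity element), $;$ relative product; integral: $1'$ is an atom; symmetric: $x^{\smile}=x$ for all $x$; a diversity atom is an atom below $0'$; representable: isomorphic to an algebra of binary relations. Flexible trio: three diversity atoms $a,b,c$ such that $a;a=b;b=c;c=1$, $a;b=a;c=b;c=0'$, and for every atom $x\notin\{1',a,b,c\}$: ($x;a=x;b=0'$) or ($x;a=x;c=0'$) or ($x;b=x;c=0'$). 1-point extension property: for $k<\omega$, $B_k(\mathbf{A})$ is the set of maps $\mu:k\times k\to At(\mathbf{A})$ with $\mu_{i,i}\le1'$, $\mu_{i,j}^{\smile}=\mu_{j,i}$ and $\mu_{i,l};\mu_{l,j}\ge\mu_{i,j}$ for all $i,j,l<k$; $\mu$ satisfies the identity condition if $\mu_{l,m}=1'$ iff $l=m$. $\mathbf{A}$ has the 1-point extension property if whenever $\mu\in B_k(\mathbf{A})$ satisfies the identity condition, $x,y$ are diversity atoms, $i,j<k$, $i\ne j$, and $\mu_{i,j}\le x;y$, there is $\mu'\in B_{k+1}(\mathbf{A})$ satisfying the identity condition with $\mu'_{l,m}=\mu_{l,m}$ for all $l,m<k$, $\mu'_{i,k}=x$ and $\mu'_{k,j}=y$. *)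

theory Defs
  imports Main
begin

text \<open>The Boolean reduct is the ambient type
  'a of class boolean_algebra (join = sup, complement = uminus, 0 = bot, 1 = top);
  the extra operations are the identity element e (written 1'), converse cv and
  relative product cp (written ;).\<close>

definition rel_alg :: "'a::boolean_algebra \<Rightarrow> ('a \<Rightarrow> 'a) \<Rightarrow> ('a \<Rightarrow> 'a \<Rightarrow> 'a) \<Rightarrow> bool" where
  "rel_alg e cv cp \<longleftrightarrow>
     (\<forall>x y z. cp (cp x y) z = cp x (cp y z)) \<and>
     (\<forall>x y z. cp (sup x y) z = sup (cp x z) (cp y z)) \<and>
     (\<forall>x. cp x e = x) \<and>
     (\<forall>x. cv (cv x) = x) \<and>
     (\<forall>x y. cv (sup x y) = sup (cv x) (cv y)) \<and>
     (\<forall>x y. cv (cp x y) = cp (cv y) (cv x)) \<and>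
     (\<forall>x y. sup (cp (cv x) (- (cp x y))) (- y) = - y)"

definition is_atom :: "'a::boolean_algebra \<Rightarrow> bool" where
  "is_atom x \<longleftrightarrow> x \<noteq> bot \<and> (\<forall>y. y \<le> x \<longrightarrow> y = bot \<or> y = x)"

definition atomic_ba :: "'a::boolean_algebra itself \<Rightarrow> bool" where
  "atomic_ba _ \<longleftrightarrow> (\<forall>x::'a. x \<noteq> bot \<longrightarrow> (\<exists>y. is_atom y \<and> y \<le> x))"

definition integral_ra :: "'a::boolean_algebra \<Rightarrow> bool" where
  "integral_ra e \<longleftrightarrow> is_atom e"

definition symmetric_ra :: "('a::boolean_algebra \<Rightarrow> 'a) \<Rightarrow> bool" where
  "symmetric_ra cv \<longleftrightarrow> (\<forall>x. cv x = x)"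

definition div_atom :: "'a::boolean_algebra \<Rightarrow> 'a \<Rightarrow> bool" where
  "div_atom e x \<longleftrightarrow> is_atom x \<and> x \<le> - e"

definition flexible_trio :: "'a::boolean_algebra \<Rightarrow> ('a \<Rightarrow> 'a \<Rightarrow> 'a) \<Rightarrow> 'a \<Rightarrow> 'a \<Rightarrow> 'a \<Rightarrow> bool" where
  "flexible_trio e cp a b c \<longleftrightarrow>
     div_atom e a \<and> div_atom e b \<and> div_atom e c \<and> a \<noteq> b \<and> a \<noteq> c \<and> b \<noteq> c \<and>
     cp a a = top \<and> cp b b = top \<and> cp c c = top \<and>
     cp a b = - e \<and> cp a c = - e \<and> cp b c = - e \<and>
     (\<forall>x. is_atom x \<and> x \<notin> {e, a, b, c} \<longrightarrow>
        (cp x a = - e \<and> cp x b = - e) \<or> (cp x a = - e \<and> cp x c = - e) \<or>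
        (cp x b = - e \<and> cp x c = - e))"

definition has_flexible_trio :: "'a::boolean_algebra \<Rightarrow> ('a \<Rightarrow> 'a \<Rightarrow> 'a) \<Rightarrow> bool" where
  "has_flexible_trio e cp \<longleftrightarrow> (\<exists>a b c. flexible_trio e cp a b c)"

text \<open>B_k(A): maps k x k -> At(A), represented as functions nat => nat => 'a
  restricted to indices below k.\<close>
definition basic_net :: "'a::boolean_algebra \<Rightarrow> ('a \<Rightarrow> 'a) \<Rightarrow> ('a \<Rightarrow> 'a \<Rightarrow> 'a) \<Rightarrow> nat \<Rightarrow> (nat \<Rightarrow> nat \<Rightarrow> 'a) \<Rightarrow> bool" where
  "basic_net e cv cp k \<mu> \<longleftrightarrow>
     (\<forall>i<k. \<forall>j<k. is_atom (\<mu> i j)) \<and>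
     (\<forall>i<k. \<mu> i i \<le> e) \<and>
     (\<forall>i<k. \<forall>j<k. cv (\<mu> i j) = \<mu> j i) \<and>
     (\<forall>i<k. \<forall>j<k. \<forall>l<k. \<mu> i j \<le> cp (\<mu> i l) (\<mu> l j))"

definition identity_cond :: "'a::boolean_algebra \<Rightarrow> nat \<Rightarrow> (nat \<Rightarrow> nat \<Rightarrow> 'a) \<Rightarrow> bool" where
  "identity_cond e k \<mu> \<longleftrightarrow> (\<forall>l<k. \<forall>m<k. \<mu> l m = e \<longleftrightarrow> l = m)"

definition one_point_ext :: "'a::boolean_algebra \<Rightarrow> ('a \<Rightarrow> 'a) \<Rightarrow> ('a \<Rightarrow> 'a \<Rightarrow> 'a) \<Rightarrow> bool" where
  "one_point_ext e cv cp \<longleftrightarrow>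
     (\<forall>k \<mu> x y i j.
        basic_net e cv cp k \<mu> \<and> identity_cond e k \<mu> \<and>
        div_atom e x \<and> div_atom e y \<and> i < k \<and> j < k \<and> i \<noteq> j \<and>
        \<mu> i j \<le> cp x y \<longrightarrow>
        (\<exists>\<mu>'. basic_net e cv cp (Suc k) \<mu>' \<and> identity_cond e (Suc k) \<mu>' \<and>
              (\<forall>l<k. \<forall>m<k. \<mu>' l m = \<mu> l m) \<and> \<mu>' i k = x \<and> \<mu>' k j = y))"

text \<open>The base points are taken from the type 'a list, whose cardinality max(|'a|, aleph0)
  suffices for every representable algebra (downward Loewenheim-Skolem).\<close>
definition representable :: "'a::boolean_algebra \<Rightarrow> ('a \<Rightarrow> 'a) \<Rightarrow> ('a \<Rightarrow> 'a \<Rightarrow> 'a) \<Rightarrow> bool" where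
  "representable e cv cp \<longleftrightarrow>
     (\<exists>(U :: 'a list set) E (h :: 'a \<Rightarrow> ('a list \<times> 'a list) set).
        equiv U E \<and> inj h \<and>
        (\<forall>x. h x \<subseteq> E) \<and>
        (\<forall>x y. h (sup x y) = h x \<union> h y) \<and>
        (\<forall>x. h (- x) = E - h x) \<and>
        h e = Id_on U \<and>
        (\<forall>x. h (cv x) = (h x)\<inverse>) \<and>
        (\<forall>x y. h (cp x y) = h x O h y))"

end

theory Submission imports Defs begin

datatype 'a T = Base | Node "'a T" "'a T" 'a 'a


fun enc :: "'a::boolean_algebra T \<Rightarrow> 'a list" where
  "enc Base = [bot]" | "enc (Node u v \<beta> \<gamma>) = top # \<beta> # \<gamma> # enc u @ enc v"

lemma enc_pref: "(bot::'a::boolean_algebra) \<noteq> top \<Longrightarrow> enc (s::'a T) @ xs = enc t @ ys \<Longrightarrow> s = t \<and> xs = ys"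
proof (induction s arbitrary: t xs ys)
  case Base thus ?case by (cases t) auto
next
  case (Node u v \<beta> \<gamma>)
  show ?case
  proof (cases t)
    case Base thus ?thesis using Node.prems by auto
  next
    case (Node u' v' \<beta>' \<gamma>')
    hence 1: "\<beta> = \<beta>'" "\<gamma> = \<gamma>'" "enc u @ (enc v @ xs) = enc u' @ (enc v' @ ys)"
      using Node.prems by auto
    hence "u = u'" "enc v @ xs = enc v' @ ys" using Node.IH(1)[OF Node.prems(1)] by blast+
    thus ?thesis using 1 Node Node.IH(2)[OF Node.prems(1)] by blast
  qed
qed

lemma enc_inj: "(bot::'a::boolean_algebra) \<noteq> top \<Longrightarrow> inj (enc :: 'a T \<Rightarrow> 'a list)"
  unfolding inj_def using enc_pref[where xs="[]" and ys="[]"] by auto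

locale sra =
  fixes e :: "'a::boolean_algebra" and cp :: "'a \<Rightarrow> 'a \<Rightarrow> 'a" and a b c :: 'a
  assumes comm: "cp x y = cp y x"
    and distr: "cp (sup x y) z = sup (cp x z) (cp y z)"
    and unit: "cp x e = x"
    and tarski: "sup (cp x (- cp x y)) (- y) = - y"
    and atomic: "x \<noteq> bot \<Longrightarrow> \<exists>y. is_atom y \<and> y \<le> x"
    and eat: "is_atom e"
    and trio: "flexible_trio e cp a b c"
begin

lemma monoL: "x \<le> y \<Longrightarrow> cp x z \<le> cp y z"
  by (metis distr sup.absorb_iff2 sup.cobounded1)
lemma monoR: "x \<le> y \<Longrightarrow> cp z x \<le> cp z y"
  by (metis comm monoL)
lemma unitL: "cp e x = x" by (metis comm unit)

lemma schroder: "inf (cp x y) z = bot \<Longrightarrow> inf (cp x z) y = bot"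
proof -
  assume "inf (cp x y) z = bot"
  hence "z \<le> - cp x y" by (simp add: inf_shunt inf_commute)
  hence "cp x z \<le> cp x (- cp x y)" by (rule monoR)
  also have "\<dots> \<le> - y" by (metis tarski sup.absorb_iff2)
  finally show ?thesis by (simp add: inf_shunt)
qed

lemma atom_le_iff: "is_atom \<alpha> \<Longrightarrow> \<alpha> \<le> X \<longleftrightarrow> inf \<alpha> X \<noteq> bot"
  unfolding is_atom_def by (metis inf.cobounded1 inf.orderE inf.absorb_iff1)

lemma atom_nz: "is_atom \<alpha> \<Longrightarrow> \<alpha> \<noteq> bot" unfolding is_atom_def by simp

lemma rot: "\<alpha> \<noteq> bot \<Longrightarrow> is_atom \<gamma> \<Longrightarrow> \<alpha> \<le> cp \<beta> \<gamma> \<Longrightarrow> \<gamma> \<le> cp \<beta> \<alpha>"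
proof -
  assume h: "\<alpha> \<noteq> bot" "is_atom \<gamma>" "\<alpha> \<le> cp \<beta> \<gamma>"
  have "inf (cp \<beta> \<gamma>) \<alpha> \<noteq> bot" using h by (metis inf.absorb2)
  hence "inf (cp \<beta> \<alpha>) \<gamma> \<noteq> bot" using schroder by blast
  thus ?thesis using h atom_le_iff by (metis inf_commute)
qed

lemma atoms_eq: "is_atom x \<Longrightarrow> is_atom y \<Longrightarrow> x \<le> y \<Longrightarrow> x = y"
  unfolding is_atom_def by blast

lemma e_sq: "x \<noteq> bot \<Longrightarrow> e \<le> cp x x"
proof (rule ccontr)
  assume h: "x \<noteq> bot" "\<not> e \<le> cp x x"
  hence "inf (cp x x) e = bot" using atom_le_iff[OF eat] by (metis inf_commute)
  hence "inf (cp x e) x = bot" by (rule schroder)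
  thus False using h unit by simp
qed

lemma e_prod: "is_atom \<beta> \<Longrightarrow> is_atom \<gamma> \<Longrightarrow> e \<le> cp \<beta> \<gamma> \<Longrightarrow> \<beta> = \<gamma>"
  using rot[of e \<gamma> \<beta>] atom_nz[OF eat] atoms_eq unit by metis

lemma div_ne: "div_atom e x \<Longrightarrow> \<not> e \<le> x"
  unfolding div_atom_def using eat atom_nz
  by (metis atoms_eq inf.orderE inf_compl_bot)

lemma atom_div: "is_atom x \<Longrightarrow> x \<noteq> e \<Longrightarrow> div_atom e x"
proof -
  assume h: "is_atom x" "x \<noteq> e"
  have "inf x e = bot"
  proof (rule ccontr)
    assume "inf x e \<noteq> bot"
    hence "x \<le> e" "e \<le> x" using h eat atom_le_iff by (metis inf_commute)+
    thus False using h by simp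
  qed
  thus ?thesis using h by (simp add: div_atom_def inf_shunt)
qed

lemma atom_sup: "is_atom \<alpha> \<Longrightarrow> \<alpha> \<le> sup x y \<Longrightarrow> \<alpha> \<le> x \<or> \<alpha> \<le> y"
  using atom_le_iff by (metis inf_sup_distrib1 sup_bot.right_neutral)

lemma atom_compl: "is_atom \<alpha> \<Longrightarrow> \<alpha> \<le> - x \<longleftrightarrow> \<not> \<alpha> \<le> x"
proof -
  assume h: "is_atom \<alpha>"
  show ?thesis
  proof
    assume a1: "\<alpha> \<le> - x" show "\<not> \<alpha> \<le> x"
    proof
      assume "\<alpha> \<le> x"
      hence "\<alpha> \<le> inf x (- x)" using a1 by (rule le_infI)
      thus False using atom_nz[OF h] bot_unique by auto
    qed
  next
    assume "\<not> \<alpha> \<le> x" thus "\<alpha> \<le> - x" using h atom_le_iff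
      by (metis inf_shunt)
  qed
qed

lemma decomp: "is_atom \<alpha> \<Longrightarrow> \<alpha> \<le> cp x y \<Longrightarrow>
   \<exists>\<beta> \<gamma>. is_atom \<beta> \<and> is_atom \<gamma> \<and> \<beta> \<le> x \<and> \<gamma> \<le> y \<and> \<alpha> \<le> cp \<beta> \<gamma>"
proof -
  assume h: "is_atom \<alpha>" "\<alpha> \<le> cp x y"
  have "inf (cp x y) \<alpha> \<noteq> bot" using h atom_le_iff by (metis inf_commute)
  hence "inf (cp x \<alpha>) y \<noteq> bot" using schroder by blast
  then obtain \<gamma> where g: "is_atom \<gamma>" "\<gamma> \<le> inf y (cp x \<alpha>)" using atomic by (metis inf_commute)
  have "inf (cp x \<alpha>) \<gamma> \<noteq> bot" using g atom_le_iff by (metis inf_commute le_inf_iff)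
  hence "inf (cp x \<gamma>) \<alpha> \<noteq> bot" using schroder by blast
  hence "inf (cp \<gamma> \<alpha>) x \<noteq> bot" using schroder comm by metis
  then obtain \<beta> where bb: "is_atom \<beta>" "\<beta> \<le> inf x (cp \<gamma> \<alpha>)" using atomic by (metis inf_commute)
  have "\<alpha> \<le> cp \<gamma> \<beta>" using rot[of \<beta> \<alpha> \<gamma>] bb h atom_nz[OF bb(1)] by simp
  hence "\<alpha> \<le> cp \<beta> \<gamma>" by (simp add: comm)
  moreover have "\<beta> \<le> x" "\<gamma> \<le> y" using bb g by simp_all
  ultimately show ?thesis using bb(1) g(1) by blast
qed

definition cons where "cons X Y Z \<longleftrightarrow> X \<le> cp Y Z \<and> Y \<le> cp X Z \<and> Z \<le> cp X Y"

lemma cons_intro: "is_atom X \<Longrightarrow> is_atom Y \<Longrightarrow> is_atom Z \<Longrightarrow> X \<le> cp Y Z \<Longrightarrow> cons X Y Z"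
proof -
  assume h: "is_atom X" "is_atom Y" "is_atom Z" "X \<le> cp Y Z"
  have 1: "Z \<le> cp X Y" using rot[of X Z Y] h atom_nz[OF h(1)] comm[of Y X] by simp
  have "X \<le> cp Z Y" using h comm[of Z Y] by simp
  hence "Y \<le> cp X Z" using rot[of X Y Z] h atom_nz[OF h(1)] comm[of Z X] by simp
  thus ?thesis using 1 h unfolding cons_def by simp
qed

lemma cons_perm: "cons X Y Z \<Longrightarrow> cons Y X Z" "cons X Y Z \<Longrightarrow> cons X Z Y" "cons X Y Z \<Longrightarrow> cons Z Y X"
  unfolding cons_def by (metis comm)+


lemma trio_facts:
  "div_atom e a" "div_atom e b" "div_atom e c" "a \<noteq> b" "a \<noteq> c" "b \<noteq> c"
  "cp a a = top" "cp b b = top" "cp c c = top" "cp a b = - e" "cp a c = - e" "cp b c = - e"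
  using trio unfolding flexible_trio_def by auto

lemma trio_flex: "is_atom x \<Longrightarrow> x \<notin> {e, a, b, c} \<Longrightarrow>
        (cp x a = - e \<and> cp x b = - e) \<or> (cp x a = - e \<and> cp x c = - e) \<or>
        (cp x b = - e \<and> cp x c = - e)"
  using trio unfolding flexible_trio_def by blast

definition compat where "compat t X \<longleftrightarrow> - e \<le> cp t X"

lemma trio_pair: "s \<in> {a,b,c} \<Longrightarrow> t \<in> {a,b,c} \<Longrightarrow> compat s t"
  unfolding compat_def using trio_facts comm[of b a] comm[of c a] comm[of c b] by auto

lemma trio_div: "t \<in> {a,b,c} \<Longrightarrow> div_atom e t"
  using trio_facts by auto

lemma two_compat: "div_atom e \<beta> \<Longrightarrow>
   (compat a \<beta> \<and> compat b \<beta>) \<or> (compat a \<beta> \<and> compat c \<beta>) \<or> (compat b \<beta> \<and> compat c \<beta>)"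
proof -
  assume h: "div_atom e \<beta>"
  show ?thesis
  proof (cases "\<beta> \<in> {a,b,c}")
    case True thus ?thesis using trio_pair by auto
  next
    case False
    have "\<beta> \<noteq> e" using h div_ne by auto
    hence "\<beta> \<notin> {e,a,b,c}" using False by auto
    moreover have "is_atom \<beta>" using h div_atom_def by auto
    ultimately show ?thesis using trio_flex[of \<beta>] unfolding compat_def
      using comm[of \<beta> a] comm[of \<beta> b] comm[of \<beta> c] by auto
  qed
qed

definition tsel where "tsel \<beta> \<gamma> = (if compat a \<beta> \<and> compat a \<gamma> then a else
   if compat b \<beta> \<and> compat b \<gamma> then b else c)"

lemma tsel_in: "tsel \<beta> \<gamma> \<in> {a,b,c}" unfolding tsel_def by auto

lemma tsel_ok: "div_atom e \<beta> \<Longrightarrow> div_atom e \<gamma> \<Longrightarrow> compat (tsel \<beta> \<gamma>) \<beta> \<and> compat (tsel \<beta> \<gamma>) \<gamma>"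
  using two_compat[of \<beta>] two_compat[of \<gamma>] unfolding tsel_def by auto

lemma compat_cons: "compat t X \<Longrightarrow> is_atom t \<Longrightarrow> is_atom X \<Longrightarrow> div_atom e Z \<Longrightarrow> cons Z t X"
  by (rule cons_intro) (auto simp: compat_def div_atom_def)

primrec tof where "tof Base = a" | "tof (Node u v \<beta> \<gamma>) = tsel \<beta> \<gamma>"
primrec par where "par z Base = False" | "par z (Node u v \<beta> \<gamma>) = (z = u \<or> z = v)"
primrec plab where "plab Base z = e" | "plab (Node u v \<beta> \<gamma>) z = (if z = u then \<beta> else \<gamma>)"

definition ulab where "ulab x y = (if size x < size y then tof y else if size y < size x then tof x
   else if tof x = a \<or> tof y = a then a else if tof x = b \<or> tof y = b then b else c)"

definition L where "L x y = (if x = y then e else if par y x then plab x y else if par x y then plab y x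
   else ulab x y)"

fun valid where "valid Base = True"
  | "valid (Node u v \<beta> \<gamma>) = (valid u \<and> valid v \<and> div_atom e \<beta> \<and> div_atom e \<gamma> \<and> L u v \<le> cp \<beta> \<gamma>)"

lemma size_par: "par z w \<Longrightarrow> size z < size w"
  by (cases w) auto

lemma L_refl[simp]: "L x x = e" unfolding L_def by simp

lemma L_sym: "L x y = L y x"
  unfolding L_def ulab_def using size_par by fastforce

lemma tof_in: "tof x \<in> {a,b,c}" using tsel_in by (cases x) auto

lemma ulab_in: "ulab x y \<in> {a,b,c}" unfolding ulab_def using tof_in by auto
lemma ulab_cases: "ulab x y = tof x \<or> ulab x y = tof y" unfolding ulab_def using tof_in[of x] tof_in[of y] by auto
lemma ulab_lt: "size x < size y \<Longrightarrow> ulab x y = tof y" unfolding ulab_def by auto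

lemma valid_par: "valid w \<Longrightarrow> par z w \<Longrightarrow> valid z" by (cases w) auto
lemma plab_div: "valid w \<Longrightarrow> par z w \<Longrightarrow> div_atom e (plab w z)" by (cases w) auto
lemma tof_compat: "valid w \<Longrightarrow> par z w \<Longrightarrow> compat (tof w) (plab w z)"
  by (cases w) (auto simp: tsel_ok)

lemma L_par: "par z w \<Longrightarrow> L w z = plab w z"
  unfolding L_def using size_par by fastforce
lemma L_unrel: "x \<noteq> y \<Longrightarrow> \<not> par x y \<Longrightarrow> \<not> par y x \<Longrightarrow> L x y = ulab x y"
  unfolding L_def by auto

lemma L_div: "valid x \<Longrightarrow> valid y \<Longrightarrow> x \<noteq> y \<Longrightarrow> div_atom e (L x y)"
proof -
  assume h: "valid x" "valid y" "x \<noteq> y"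
  show ?thesis
  proof (cases "par y x")
    case True thus ?thesis using h L_par plab_div by metis
  next
    case f1: False
    show ?thesis
    proof (cases "par x y")
      case True thus ?thesis using h L_par plab_div L_sym by metis
    next
      case False thus ?thesis using f1 h L_unrel ulab_in trio_div by metis
    qed
  qed
qed

lemma L_atom: "valid x \<Longrightarrow> valid y \<Longrightarrow> is_atom (L x y)"
  using L_div eat div_atom_def by (cases "x = y") auto

lemma child: "valid w \<Longrightarrow> w = Node u v \<beta> \<gamma> \<Longrightarrow> L u v \<le> cp (L w u) (L w v)"
proof -
  assume h: "valid w" "w = Node u v \<beta> \<gamma>"
  have "L w u = \<beta>" using h L_par[of u w] by simp
  moreover have "L w v = (if v = u then \<beta> else \<gamma>)" using h L_par[of v w] by simp
  moreover have "L u v \<le> cp \<beta> \<gamma>" using h by simp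
  moreover have "\<beta> \<noteq> bot" using h by (simp add: div_atom_def atom_nz)
  ultimately show ?thesis using e_sq[of \<beta>] by (cases "v = u") auto
qed

definition Tr where "Tr p q r \<longleftrightarrow> cons (L p q) (L q r) (L p r)"

lemma Tr_perm: "Tr p q r \<Longrightarrow> Tr q p r" "Tr p q r \<Longrightarrow> Tr p r q"
  unfolding Tr_def using cons_perm L_sym by metis+

definition rel where "rel x y \<longleftrightarrow> par x y \<or> par y x"

lemma rel_sym: "rel x y = rel y x" unfolding rel_def by auto

lemma caseA: "valid p \<Longrightarrow> valid q \<Longrightarrow> valid r \<Longrightarrow> p \<noteq> q \<Longrightarrow> par p r \<Longrightarrow> par q r \<Longrightarrow> Tr p q r"
proof -
  assume h: "valid p" "valid q" "valid r" "p \<noteq> q" "par p r" "par q r"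
  then obtain u v \<beta> \<gamma> where r: "r = Node u v \<beta> \<gamma>" by (cases r) auto
  have uv: "(p = u \<and> q = v) \<or> (p = v \<and> q = u)" using h r by auto
  have "L u v \<le> cp (L r u) (L r v)" using child h r by blast
  hence "L p q \<le> cp (L r p) (L r q)" using uv L_sym comm by metis
  hence "cons (L p q) (L r p) (L r q)"
    using h by (intro cons_intro L_atom) auto
  hence "cons (L p q) (L p r) (L q r)" using L_sym[of r p] L_sym[of r q] by simp
  thus ?thesis unfolding Tr_def by (rule cons_perm(2))
qed

lemma caseC: "valid p \<Longrightarrow> valid q \<Longrightarrow> valid r \<Longrightarrow> p \<noteq> q \<Longrightarrow> q \<noteq> r \<Longrightarrow> p \<noteq> r \<Longrightarrow>
   \<not> rel p q \<Longrightarrow> \<not> rel q r \<Longrightarrow> Tr p q r"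
proof -
  assume h: "valid p" "valid q" "valid r" "p \<noteq> q" "q \<noteq> r" "p \<noteq> r" "\<not> rel p q" "\<not> rel q r"
  have 1: "L p q \<in> {a,b,c}" "L q r \<in> {a,b,c}" using h L_unrel ulab_in unfolding rel_def by metis+
  have "cons (L p r) (L p q) (L q r)"
    using 1 h trio_facts by (intro compat_cons trio_pair L_div) (auto simp: div_atom_def)
  thus ?thesis unfolding Tr_def using cons_perm by metis
qed

lemma caseB: "valid p \<Longrightarrow> valid q \<Longrightarrow> valid r \<Longrightarrow> p \<noteq> q \<Longrightarrow> q \<noteq> r \<Longrightarrow> p \<noteq> r \<Longrightarrow>
   \<not> rel p q \<Longrightarrow> rel q r \<Longrightarrow> rel p r \<Longrightarrow> Tr p q r"
proof -
  assume h: "valid p" "valid q" "valid r" "p \<noteq> q" "q \<noteq> r" "p \<noteq> r" "\<not> rel p q" "rel q r" "rel p r"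
  show ?thesis
  proof (cases "par p r \<and> par q r")
    case True thus ?thesis using caseA h by blast
  next
    case False
    have Lpq: "L p q = ulab p q" using h L_unrel unfolding rel_def by blast
    have "\<exists>X. compat (L p q) X \<and> (X = L p r \<or> X = L q r)"
    proof (cases "par r p")
      case rp: True
      show ?thesis
      proof (cases "par r q")
        case True
        have "compat (tof p) (L p r)" "compat (tof q) (L q r)"
          using rp True h tof_compat L_par by metis+
        thus ?thesis using ulab_cases[of p q] Lpq by metis
      next
        case False
        hence "par q r" using h rel_def by blast
        hence "size q < size p" using size_par[OF rp] size_par[of q r] by linarith
        hence "L p q = tof p" using Lpq ulab_def by simp
        moreover have "compat (tof p) (L p r)" using rp h tof_compat L_par by metis
        ultimately show ?thesis by metis
      qed
    next
      case False
      hence pr: "par p r" using h rel_def by blast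
      hence "\<not> par q r" using \<open>\<not> (par p r \<and> par q r)\<close> by blast
      hence rq: "par r q" using h rel_def by blast
      hence "size p < size q" using size_par[OF pr] size_par[OF rq] by linarith
      hence "L p q = tof q" using Lpq ulab_lt by simp
      moreover have "compat (tof q) (L q r)" using rq h tof_compat L_par by metis
      ultimately show ?thesis by metis
    qed
    then obtain X where X: "compat (L p q) X" "X = L p r \<or> X = L q r" by blast
    have at: "is_atom (L p q)" "is_atom (L p r)" "is_atom (L q r)" using h L_atom by auto
    show ?thesis
    proof (cases "X = L p r")
      case True
      have "cons (L q r) (L p q) (L p r)"
        using X True at h by (intro compat_cons L_div) auto
      thus ?thesis unfolding Tr_def using cons_perm by metis
    next
      case False
      hence "X = L q r" using X by simp
      hence "cons (L p r) (L p q) (L q r)"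
        using X at h by (intro compat_cons L_div) auto
      thus ?thesis unfolding Tr_def using cons_perm by metis
    qed
  qed
qed

lemma caseD: "valid p \<Longrightarrow> valid q \<Longrightarrow> valid r \<Longrightarrow> p \<noteq> q \<Longrightarrow> q \<noteq> r \<Longrightarrow> p \<noteq> r \<Longrightarrow>
   rel p q \<Longrightarrow> rel q r \<Longrightarrow> rel p r \<Longrightarrow> Tr p q r"
proof -
  assume h: "valid p" "valid q" "valid r" "p \<noteq> q" "q \<noteq> r" "p \<noteq> r" "rel p q" "rel q r" "rel p r"
  have "(par p r \<and> par q r) \<or> (par p q \<and> par r q) \<or> (par q p \<and> par r p)"
    using h size_par unfolding rel_def by (meson less_trans not_less_iff_gr_or_eq)
  moreover have "par p r \<and> par q r \<Longrightarrow> Tr p q r" using caseA h by blast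
  moreover have "par p q \<and> par r q \<Longrightarrow> Tr p q r" using caseA[of p r q] h Tr_perm by metis
  moreover have "par q p \<and> par r p \<Longrightarrow> Tr p q r" using caseA[of q r p] h Tr_perm by metis
  ultimately show ?thesis by blast
qed

lemma tri: "valid p \<Longrightarrow> valid q \<Longrightarrow> valid r \<Longrightarrow> p \<noteq> q \<Longrightarrow> q \<noteq> r \<Longrightarrow> p \<noteq> r \<Longrightarrow> Tr p q r"
proof -
  assume h: "valid p" "valid q" "valid r" "p \<noteq> q" "q \<noteq> r" "p \<noteq> r"
  show ?thesis
  proof (cases "rel p q")
    case pq: True
    show ?thesis
    proof (cases "rel q r")
      case qr: True
      show ?thesis
      proof (cases "rel p r")
        case True thus ?thesis using caseD h pq qr by blast
      next
        case False
        have "Tr p r q" using caseB[of p r q] h False pq qr rel_sym by metis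
        thus ?thesis using Tr_perm by metis
      qed
    next
      case qr: False
      show ?thesis
      proof (cases "rel p r")
        case True
        have "Tr q r p" using caseB[of q r p] h True pq qr rel_sym by metis
        thus ?thesis using Tr_perm by metis
      next
        case False
        have "Tr q r p" using caseC[of q r p] h False qr rel_sym by metis
        thus ?thesis using Tr_perm by metis
      qed
    qed
  next
    case pq: False
    show ?thesis
    proof (cases "rel q r")
      case qr: True
      show ?thesis
      proof (cases "rel p r")
        case True thus ?thesis using caseB h pq qr by blast
      next
        case False
        have "Tr q p r" using caseC[of q p r] h False pq rel_sym by metis
        thus ?thesis using Tr_perm by metis
      qed
    next
      case False thus ?thesis using caseC h pq by blast
    qed
  qed
qed

lemma trans_L: "valid p \<Longrightarrow> valid q \<Longrightarrow> valid r \<Longrightarrow> L p q \<le> cp (L p r) (L r q)"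
proof -
  assume h: "valid p" "valid q" "valid r"
  show ?thesis
  proof (cases "p = q")
    case True
    have "e \<le> cp (L p r) (L p r)" using e_sq atom_nz[OF L_atom[OF h(1) h(3)]] by blast
    thus ?thesis using True L_sym[of r q] by simp
  next
    case pq: False
    show ?thesis
    proof (cases "r = p")
      case True thus ?thesis by (simp add: unitL)
    next
      case rp: False
      show ?thesis
      proof (cases "r = q")
        case True thus ?thesis by (simp add: unit)
      next
        case False
        hence "Tr p q r" using tri h pq rp by metis
        thus ?thesis unfolding Tr_def cons_def using L_sym comm by metis
      qed
    qed
  qed
qed

lemma witness: "valid p \<Longrightarrow> valid q \<Longrightarrow> is_atom \<beta> \<Longrightarrow> is_atom \<gamma> \<Longrightarrow> L p q \<le> cp \<beta> \<gamma> \<Longrightarrow>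
   \<exists>w. valid w \<and> L p w = \<beta> \<and> L w q = \<gamma>"
proof -
  assume h: "valid p" "valid q" "is_atom \<beta>" "is_atom \<gamma>" "L p q \<le> cp \<beta> \<gamma>"
  have La: "is_atom (L p q)" using h L_atom by auto
  show ?thesis
  proof (cases "\<beta> = e")
    case True
    hence "L p q = \<gamma>" using h La atoms_eq unitL by auto
    thus ?thesis using h True by (intro exI[of _ p]) auto
  next
    case b: False
    show ?thesis
    proof (cases "\<gamma> = e")
      case True
      hence "L p q = \<beta>" using h La atoms_eq unit by auto
      thus ?thesis using h True by (intro exI[of _ q]) auto
    next
      case False
      define w where "w = Node p q \<beta> \<gamma>"
      have dv: "div_atom e \<beta>" "div_atom e \<gamma>" using h b False atom_div by auto
      have vw: "valid w" using h dv w_def by simp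
      have "L p w = \<beta>" using L_par[of p w] L_sym w_def by simp
      moreover have "L w q = \<gamma>"
      proof (cases "q = p")
        case True
        hence "e \<le> cp \<beta> \<gamma>" using h by simp
        hence "\<beta> = \<gamma>" using e_prod h by blast
        thus ?thesis using True L_par[of q w] w_def by simp
      next
        case False thus ?thesis using L_par[of q w] w_def by simp
      qed
      ultimately show ?thesis using vw by blast
    qed
  qed
qed

lemma realize: "is_atom \<alpha> \<Longrightarrow> \<exists>p q. valid p \<and> valid q \<and> L p q = \<alpha>"
proof (cases "\<alpha> = e")
  case True thus ?thesis by (intro exI[of _ Base]) auto
next
  case False
  assume h: "is_atom \<alpha>"
  hence d: "div_atom e \<alpha>" using False atom_div by auto
  have "e \<le> cp \<alpha> \<alpha>" using e_sq atom_nz h by auto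
  hence "valid (Node Base Base \<alpha> \<alpha>)" using d by simp
  moreover have "L (Node Base Base \<alpha> \<alpha>) Base = \<alpha>" using L_par[of Base "Node Base Base \<alpha> \<alpha>"] by simp
  moreover have "valid Base" by simp
  ultimately show ?thesis by blast
qed


lemma bot_top: "(bot::'a) \<noteq> top"
  using atom_nz[OF eat] by (metis bot_unique top_greatest)

lemma div_not_le_e: "div_atom e x \<Longrightarrow> \<not> x \<le> e"
proof
  assume h: "div_atom e x" "x \<le> e"
  hence "x \<le> inf e (- e)" unfolding div_atom_def by (intro le_infI) auto
  thus False using h atom_nz unfolding div_atom_def using bot_unique by auto
qed

definition hh where "hh x = {(enc p, enc q) | p q. valid p \<and> valid q \<and> L p q \<le> x}"
definition UU where "UU = enc ` {p. valid p}"

lemma mem_hh: "valid p \<Longrightarrow> valid q \<Longrightarrow> (enc p, enc q) \<in> hh x \<longleftrightarrow> L p q \<le> x"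
  unfolding hh_def using enc_inj[OF bot_top] by (auto dest: injD)

lemma hh_sub: "hh x \<subseteq> UU \<times> UU" unfolding hh_def UU_def by auto

lemma hh_cases: "(P, Q) \<in> UU \<times> UU \<Longrightarrow> (\<And>p q. P = enc p \<Longrightarrow> Q = enc q \<Longrightarrow> valid p \<Longrightarrow> valid q \<Longrightarrow> R) \<Longrightarrow> R"
  unfolding UU_def by auto

lemma hh_ext: "(\<And>p q. valid p \<Longrightarrow> valid q \<Longrightarrow> (enc p, enc q) \<in> A \<longleftrightarrow> (enc p, enc q) \<in> B)
   \<Longrightarrow> A \<subseteq> UU \<times> UU \<Longrightarrow> B \<subseteq> UU \<times> UU \<Longrightarrow> A = B"
  by (auto elim!: hh_cases)

lemma rep: "representable e (\<lambda>x. x) cp"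
  unfolding representable_def
proof (intro exI conjI allI)
  show "equiv UU (UU \<times> UU)" unfolding equiv_def refl_on_def sym_def trans_def by auto
  show "inj hh"
  proof (rule injI, rule ccontr)
    fix x y assume h: "hh x = hh y" "x \<noteq> y"
    have "inf x (- y) \<noteq> bot \<or> inf y (- x) \<noteq> bot"
      using h(2) by (metis inf_shunt double_compl order.antisym)
    then obtain z w where zw: "inf z (- w) \<noteq> bot" "hh z = hh w" using h by metis
    then obtain \<alpha> where al: "is_atom \<alpha>" "\<alpha> \<le> inf z (- w)" using atomic by blast
    then obtain p q where pq: "valid p" "valid q" "L p q = \<alpha>" using realize by blast
    have "\<alpha> \<le> z" "\<alpha> \<le> - w" using al by auto
    hence "(enc p, enc q) \<in> hh z" using mem_hh pq by simp
    hence "\<alpha> \<le> w" using zw mem_hh pq by simp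
    thus False using \<open>\<alpha> \<le> - w\<close> al atom_compl by blast
  qed
  fix x y
  show "hh x \<subseteq> UU \<times> UU" by (rule hh_sub)
  show "hh (sup x y) = hh x \<union> hh y"
    by (rule hh_ext) (use hh_sub in \<open>auto simp: mem_hh dest: atom_sup[OF L_atom] intro: le_supI1 le_supI2\<close>)
  show "hh (- x) = UU \<times> UU - hh x"
    by (rule hh_ext) (use hh_sub in \<open>auto simp: mem_hh atom_compl[OF L_atom] UU_def\<close>)
  show "hh (x) = (hh x)\<inverse>"
    by (rule hh_ext) (use hh_sub in \<open>auto simp: mem_hh L_sym[of _ _]\<close>)
  show "hh e = Id_on UU"
  proof (rule hh_ext)
    fix p q assume v: "valid p" "valid q"
    have "L p q \<le> e \<longleftrightarrow> p = q" using div_not_le_e L_div v by (cases "p = q") auto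
    thus "(enc p, enc q) \<in> hh e \<longleftrightarrow> (enc p, enc q) \<in> Id_on UU"
    proof -
      have "enc p = enc q \<longleftrightarrow> p = q" using enc_inj[OF bot_top] by (auto dest: injD)
      moreover have "enc p \<in> UU" using v UU_def by auto
      ultimately show ?thesis using v mem_hh \<open>L p q \<le> e \<longleftrightarrow> p = q\<close> by (auto simp: Id_on_def)
    qed
  qed (use hh_sub in \<open>auto simp: Id_on_def\<close>)
  show "hh (cp x y) = hh x O hh y"
  proof (rule hh_ext)
    fix p q assume v: "valid p" "valid q"
    show "(enc p, enc q) \<in> hh (cp x y) \<longleftrightarrow> (enc p, enc q) \<in> hh x O hh y"
    proof
      assume "(enc p, enc q) \<in> hh (cp x y)"
      hence "L p q \<le> cp x y" using mem_hh v by simp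
      then obtain \<beta> \<gamma> where bg: "is_atom \<beta>" "is_atom \<gamma>" "\<beta> \<le> x" "\<gamma> \<le> y" "L p q \<le> cp \<beta> \<gamma>"
        using decomp L_atom v by blast
      then obtain w where w: "valid w" "L p w = \<beta>" "L w q = \<gamma>" using witness v by blast
      have "(enc p, enc w) \<in> hh x" "(enc w, enc q) \<in> hh y" using mem_hh v w bg by auto
      thus "(enc p, enc q) \<in> hh x O hh y" by blast
    next
      assume "(enc p, enc q) \<in> hh x O hh y"
      then obtain W where W: "(enc p, W) \<in> hh x" "(W, enc q) \<in> hh y" by blast
      then obtain w where w: "W = enc w" "valid w" using hh_sub UU_def by blast
      have "L p w \<le> x" "L w q \<le> y" using W w mem_hh v by auto
      hence "cp (L p w) (L w q) \<le> cp x y" using monoL monoR order.trans by blast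
      hence "L p q \<le> cp x y" using trans_L[OF v w(2)] by (rule order.trans[rotated])
      thus "(enc p, enc q) \<in> hh (cp x y)" using mem_hh v by simp
    qed
  qed (use hh_sub in \<open>auto simp: relcomp_unfold\<close>)
qed


lemma cons_all: "cons X Y Z \<Longrightarrow> cons X Z Y \<and> cons Y X Z \<and> cons Y Z X \<and> cons Z X Y \<and> cons Z Y X \<and> cons X Y Z"
  using cons_perm by metis

lemma net_tri:
  assumes "\<forall>l<K. N l l = e" "\<forall>l<K. \<forall>m<K. N l m = N m l" "\<forall>l<K. \<forall>m<K. is_atom (N l m)"
    "\<forall>l<K. \<forall>m<K. \<forall>n<K. l \<noteq> m \<longrightarrow> m \<noteq> n \<longrightarrow> l \<noteq> n \<longrightarrow> cons (N l m) (N m n) (N l n)"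
  shows "\<forall>l<K. \<forall>m<K. \<forall>n<K. N l m \<le> cp (N l n) (N n m)"
proof (intro allI impI)
  fix l m n assume h: "l < K" "m < K" "n < K"
  show "N l m \<le> cp (N l n) (N n m)"
  proof (cases "l = m")
    case True
    have "e \<le> cp (N l n) (N l n)" using e_sq atom_nz assms(3) h by blast
    thus ?thesis using True assms(1,2) h by simp
  next
    case lm: False
    show ?thesis
    proof (cases "n = l")
      case True thus ?thesis using assms(1) h by (simp add: unitL)
    next
      case nl: False
      show ?thesis
      proof (cases "n = m")
        case True thus ?thesis using assms(1) h by (simp add: unit)
      next
        case False
        hence "cons (N l m) (N m n) (N l n)" using assms(4) h lm nl by metis
        hence "N l m \<le> cp (N m n) (N l n)" unfolding cons_def by simp
        thus ?thesis using assms(2) h comm[of "N m n" "N l n"] by simp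
      qed
    qed
  qed
qed

lemma ope: "one_point_ext e (\<lambda>x. x) cp"
  unfolding one_point_ext_def
proof (intro allI impI)
  fix k \<mu> x y i j
  assume H: "basic_net e (\<lambda>x. x) cp k \<mu> \<and> identity_cond e k \<mu> \<and>
        div_atom e x \<and> div_atom e y \<and> i < k \<and> j < k \<and> i \<noteq> j \<and> \<mu> i j \<le> cp x y"
  have bn: "basic_net e (\<lambda>x. x) cp k \<mu>" and ic: "identity_cond e k \<mu>" using H by auto
  have at: "\<And>l m. l < k \<Longrightarrow> m < k \<Longrightarrow> is_atom (\<mu> l m)" using bn unfolding basic_net_def by auto
  have sy: "\<And>l m. l < k \<Longrightarrow> m < k \<Longrightarrow> \<mu> l m = \<mu> m l" using bn unfolding basic_net_def by auto
  have tr: "\<And>l m n. l < k \<Longrightarrow> m < k \<Longrightarrow> n < k \<Longrightarrow> \<mu> l m \<le> cp (\<mu> l n) (\<mu> n m)"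
    using bn unfolding basic_net_def by auto
  have idc: "\<And>l m. l < k \<Longrightarrow> m < k \<Longrightarrow> \<mu> l m = e \<longleftrightarrow> l = m" using ic unfolding identity_cond_def by auto
  have dv: "\<And>l m. l < k \<Longrightarrow> m < k \<Longrightarrow> l \<noteq> m \<Longrightarrow> div_atom e (\<mu> l m)"
    using at idc atom_div by blast
  have xy: "div_atom e x" "div_atom e y" "i < k" "j < k" "i \<noteq> j" "\<mu> i j \<le> cp x y" using H by auto
  define t where "t = tsel x y"
  have tc: "compat t x" "compat t y" using tsel_ok xy t_def by auto
  have tt: "compat t t" using trio_pair tsel_in t_def by auto
  have td: "div_atom e t" using trio_div tsel_in t_def by auto
  define nb where "nb m = (if m = i then x else if m = j then y else t)" for m
  have nbd: "div_atom e (nb m)" for m using xy td nb_def by auto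
  have nba: "is_atom (nb m)" for m using nbd div_atom_def by auto
  have K: "\<mu> p q \<le> cp (nb p) (nb q)" if pq: "p < k" "q < k" "p \<noteq> q" for p q
  proof -
    have m: "\<mu> p q \<le> - e" using dv pq div_atom_def by blast
    have cx: "-e \<le> cp x t" "-e \<le> cp y t" using tc comm compat_def by metis+
    show ?thesis
    proof (cases "p = i \<and> q = j")
      case True thus ?thesis using xy nb_def by simp
    next
      case f1: False
      show ?thesis
      proof (cases "p = j \<and> q = i")
        case True thus ?thesis using xy nb_def sy comm[of x y] pq by auto
      next
        case False
        have "-e \<le> cp (nb p) (nb q)"
          using f1 False pq tc tt cx comm[of t x] comm[of t y] unfolding nb_def compat_def by auto
        thus ?thesis using m by simp
      qed
    qed
  qed
  have Kc: "cons (\<mu> p q) (nb p) (nb q)" if "p < k" "q < k" "p \<noteq> q" for p q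
    using K[OF that] at that nba by (intro cons_intro) auto
  define \<mu>' where "\<mu>' l m = (if l < k \<and> m < k then \<mu> l m else if l < k then nb l else if m < k then nb m else e)" for l m
  have at': "\<forall>l<Suc k. \<forall>m<Suc k. is_atom (\<mu>' l m)" using at nba eat \<mu>'_def by auto
  have e': "\<forall>l<Suc k. \<mu>' l l = e" using idc \<mu>'_def by auto
  have sy': "\<forall>l<Suc k. \<forall>m<Suc k. \<mu>' l m = \<mu>' m l" using sy \<mu>'_def by auto
  have cons': "\<forall>l<Suc k. \<forall>m<Suc k. \<forall>n<Suc k. l \<noteq> m \<longrightarrow> m \<noteq> n \<longrightarrow> l \<noteq> n \<longrightarrow> cons (\<mu>' l m) (\<mu>' m n) (\<mu>' l n)"
  proof (intro allI impI)
    fix l m n assume h: "l < Suc k" "m < Suc k" "n < Suc k" "l \<noteq> m" "m \<noteq> n" "l \<noteq> n"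
    show "cons (\<mu>' l m) (\<mu>' m n) (\<mu>' l n)"
    proof (cases "l < k \<and> m < k \<and> n < k")
      case True
      hence "cons (\<mu> l m) (\<mu> l n) (\<mu> n m)" using tr at by (intro cons_intro) auto
      hence "cons (\<mu> l m) (\<mu> n m) (\<mu> l n)" by (rule cons_perm(2))
      hence "cons (\<mu> l m) (\<mu> m n) (\<mu> l n)" using sy[of n m] True by simp
      thus ?thesis using True \<mu>'_def by simp
    next
      case False
      hence "l = k \<or> m = k \<or> n = k" using h by auto
      moreover have "n = k \<Longrightarrow> ?thesis"
      proof -
        assume nk: "n = k"
        hence lt: "l < k" "m < k" using h by auto
        have "cons (\<mu> l m) (nb m) (nb l)" using cons_perm(2)[OF Kc[OF lt h(4)]] .
        thus ?thesis using nk lt unfolding \<mu>'_def by simp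
      qed
      moreover have "l = k \<Longrightarrow> ?thesis"
      proof -
        assume nk: "l = k"
        hence lt: "m < k" "n < k" using h by auto
        have "cons (nb m) (\<mu> m n) (nb n)" using cons_perm(1)[OF Kc[OF lt h(5)]] .
        thus ?thesis using nk lt unfolding \<mu>'_def by simp
      qed
      moreover have "m = k \<Longrightarrow> ?thesis"
      proof -
        assume nk: "m = k"
        hence lt: "l < k" "n < k" using h by auto
        have "cons (nb l) (nb n) (\<mu> l n)" using cons_perm(2)[OF cons_perm(1)[OF Kc[OF lt h(6)]]] .
        thus ?thesis using nk lt unfolding \<mu>'_def by simp
      qed
      ultimately show ?thesis by blast
    qed
  qed
  have net: "basic_net e (\<lambda>x. x) cp (Suc k) \<mu>'"
    unfolding basic_net_def using at' e' sy' net_tri[OF e' sy' at' cons'] by auto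
  have nbe: "nb m \<noteq> e" for m using nbd div_ne by blast
  have idc': "identity_cond e (Suc k) \<mu>'"
    unfolding identity_cond_def \<mu>'_def using idc nbe by auto
  show "\<exists>\<mu>'. basic_net e (\<lambda>x. x) cp (Suc k) \<mu>' \<and> identity_cond e (Suc k) \<mu>' \<and>
              (\<forall>l<k. \<forall>m<k. \<mu>' l m = \<mu> l m) \<and> \<mu>' i k = x \<and> \<mu>' k j = y"
    using net idc' xy by (intro exI[of _ \<mu>']) (auto simp: \<mu>'_def nb_def)
qed

end

theorem theorem4:
  fixes e :: "'a::boolean_algebra" and cv :: "'a \<Rightarrow> 'a" and cp :: "'a \<Rightarrow> 'a \<Rightarrow> 'a"
  assumes "rel_alg e cv cp"
    and "atomic_ba TYPE('a)"
    and "symmetric_ra cv"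
    and "integral_ra e"
    and "has_flexible_trio e cp"
  shows "one_point_ext e cv cp \<and> representable e cv cp"
proof -
  have cv: "cv = (\<lambda>x. x)" using assms(3) symmetric_ra_def by auto
  obtain a b c where tr: "flexible_trio e cp a b c" using assms(5) has_flexible_trio_def by blast
  have R: "sra e cp a b c"
  proof
    fix x y z
    show "cp x y = cp y x" using assms(1) cv unfolding rel_alg_def by metis
    show "cp (sup x y) z = sup (cp x z) (cp y z)" using assms(1) unfolding rel_alg_def by blast
    show "cp x e = x" using assms(1) unfolding rel_alg_def by blast
    show "sup (cp x (- cp x y)) (- y) = - y" using assms(1) cv unfolding rel_alg_def by simp
    show "x \<noteq> bot \<Longrightarrow> \<exists>y. is_atom y \<and> y \<le> x" using assms(2) unfolding atomic_ba_def by blast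
    show "is_atom e" using assms(4) integral_ra_def by auto
    show "flexible_trio e cp a b c" by (rule tr)
  qed
  show ?thesis using sra.ope[OF R] sra.rep[OF R] cv by simp
qed

end
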